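(* Consider the following group-based qualification system (the 2018 FIFA World Cup qualification format, European zone). There are $k=9$ groups of $6$ teams each; within each group every pair of teams plays a home and an away match. A win gives $3$ points, a draw $1$, a loss $0$. In each group teams are ranked by: (1) points, (2) goal difference (goals scored minus goals conceded) over all group matches, (3) goals scored over all group matches, then by any further fixed tie-breaking rules producing a strict order. Group winners are directly qualified ($\mathcal{R}=2$); teams ranked third to sixth are eliminated ($\mathcal{R}=0$). The nine runners-up form the repechage group; each runner-up is evaluated only on its $8$ matches against the teams ranked first to fifth in its group (the two matches against the sixth-placed team are discarded), and the runners-up are ranked by (1) points, (2) goal difference, (3) goals scored, computed over these $8$ matches, then by further fixed tie-breaking rules. The eight best runners-up advance to the play-offs ($\mathcal{R}=1$) and the worst runner-up is eliminated ($\mathcal{R}=0$). Then this system is not strategy-proof: there exist a team $x$ in some group and two sets of group results $V,\bar V$ that coincide except that in one match of $x$ the opponent scores more goals against $x$ under $\bar V$ than under $V$, such that $\mathcal{R}(V,x)=0$ and $\mathcal{R}(\bar V,x)=1$.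
   Context: $\mathcal{R}(V,x)\in\{0,1,2\}$ denotes the outcome for team $x$ under the full set of match results $V$ of all nine groups: $2$ = directly qualified, $1$ = advanced to the play-offs, $0$ = eliminated. A set of group results records, for every ordered pair $(x,y)$ of distinct teams of the same group, the numbers of goals scored by the home team $x$ and the away team $y$ in their match at $x$'s home. *)

theory Defs
  imports Main
begin

text \<open>A team is a pair (group index, position in group); 9 groups of 6 teams.\<close>
type_synonym team = "nat \<times> nat"

text \<open>Results: V x y = (goals of home team x, goals of away team y) in the match at x's home.\<close>
type_synonym results = "team \<Rightarrow> team \<Rightarrow> nat \<times> nat"

definition teams :: "team set" where
  "teams = {(g, i). g < 9 \<and> i < 6}"

definition opp :: "team \<Rightarrow> team set" where
  "opp x = {y \<in> teams. fst y = fst x \<and> y \<noteq> x}"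

definition match_pts :: "nat \<Rightarrow> nat \<Rightarrow> nat" where
  "match_pts a b = (if a > b then 3 else if a = b then 1 else 0)"

definition pts :: "results \<Rightarrow> team set \<Rightarrow> team \<Rightarrow> nat" where
  "pts V S x = (\<Sum>y\<in>S. match_pts (fst (V x y)) (snd (V x y)) + match_pts (snd (V y x)) (fst (V y x)))"

definition gs :: "results \<Rightarrow> team set \<Rightarrow> team \<Rightarrow> nat" where
  "gs V S x = (\<Sum>y\<in>S. fst (V x y) + snd (V y x))"

definition gc :: "results \<Rightarrow> team set \<Rightarrow> team \<Rightarrow> nat" where
  "gc V S x = (\<Sum>y\<in>S. snd (V x y) + fst (V y x))"

definition gd :: "results \<Rightarrow> team set \<Rightarrow> team \<Rightarrow> int" where
  "gd V S x = int (gs V S x) - int (gc V S x)"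

definition ranks_above ::
  "results \<Rightarrow> (team \<Rightarrow> team \<Rightarrow> bool) \<Rightarrow> team set \<Rightarrow> team \<Rightarrow> team set \<Rightarrow> team \<Rightarrow> bool" where
  "ranks_above V tb Sx x Sy y =
     (pts V Sx x > pts V Sy y \<or>
      (pts V Sx x = pts V Sy y \<and>
       (gd V Sx x > gd V Sy y \<or>
        (gd V Sx x = gd V Sy y \<and>
         (gs V Sx x > gs V Sy y \<or>
          (gs V Sx x = gs V Sy y \<and> tb x y))))))"

definition strict_total_on :: "'a set \<Rightarrow> ('a \<Rightarrow> 'a \<Rightarrow> bool) \<Rightarrow> bool" where
  "strict_total_on A r \<longleftrightarrow>
     (\<forall>a\<in>A. \<not> r a a) \<and>
     (\<forall>a\<in>A. \<forall>b\<in>A. \<forall>c\<in>A. r a b \<and> r b c \<longrightarrow> r a c) \<and>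
     (\<forall>a\<in>A. \<forall>b\<in>A. a \<noteq> b \<longrightarrow> r a b \<or> r b a)"

text \<open>Position (1..6) of x in its group.\<close>
definition grank :: "(results \<Rightarrow> team \<Rightarrow> team \<Rightarrow> bool) \<Rightarrow> results \<Rightarrow> team \<Rightarrow> nat" where
  "grank tb V x = card {y \<in> opp x. ranks_above V (tb V) (opp y) y (opp x) x} + 1"

definition ru_opp :: "(results \<Rightarrow> team \<Rightarrow> team \<Rightarrow> bool) \<Rightarrow> results \<Rightarrow> team \<Rightarrow> team set" where
  "ru_opp tb V x = {y \<in> opp x. grank tb V y \<noteq> 6}"

definition runners_up :: "(results \<Rightarrow> team \<Rightarrow> team \<Rightarrow> bool) \<Rightarrow> results \<Rightarrow> team set" where
  "runners_up tb V = {x \<in> teams. grank tb V x = 2}"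

definition rrank ::
  "(results \<Rightarrow> team \<Rightarrow> team \<Rightarrow> bool) \<Rightarrow> (results \<Rightarrow> team \<Rightarrow> team \<Rightarrow> bool) \<Rightarrow> results \<Rightarrow> team \<Rightarrow> nat" where
  "rrank tb tb2 V x =
     card {y \<in> runners_up tb V. y \<noteq> x \<and>
             ranks_above V (tb2 V) (ru_opp tb V y) y (ru_opp tb V x) x} + 1"

text \<open>Outcome: 2 = directly qualified, 1 = play-offs, 0 = eliminated.\<close>
definition outcome ::
  "(results \<Rightarrow> team \<Rightarrow> team \<Rightarrow> bool) \<Rightarrow> (results \<Rightarrow> team \<Rightarrow> team \<Rightarrow> bool) \<Rightarrow> results \<Rightarrow> team \<Rightarrow> nat" where
  "outcome tb tb2 V x =
     (if grank tb V x = 1 then 2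
      else if grank tb V x = 2 \<and> rrank tb tb2 V x \<le> 8 then 1
      else 0)"

definition opponent_scores_more :: "results \<Rightarrow> results \<Rightarrow> team \<Rightarrow> team \<Rightarrow> bool" where
  "opponent_scores_more V V' x y \<longleftrightarrow>
     ((\<forall>a b. (a, b) \<noteq> (x, y) \<longrightarrow> V' a b = V a b) \<and>
        fst (V' x y) = fst (V x y) \<and> snd (V' x y) > snd (V x y)) \<or>
     ((\<forall>a b. (a, b) \<noteq> (y, x) \<longrightarrow> V' a b = V a b) \<and>
        snd (V' y x) = snd (V y x) \<and> fst (V' y x) > fst (V y x))"

end

theory Submission
  imports Defs
begin

definition oppl :: "nat \<Rightarrow> nat \<Rightarrow> team list" where
  "oppl g i = map (\<lambda>j. (g,j)) (filter (\<lambda>j. j \<noteq> i) [0,1,2,3,4,5])"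

lemma lt6: "(j::nat) < 6 \<longleftrightarrow> j \<in> set [0,1,2,3,4,5]"
  by (simp add: numeral_eq_Suc less_Suc_eq)

lemma mem_oppl: "y \<in> set (oppl g i) \<longleftrightarrow> fst y = g \<and> snd y \<in> set [0,1,2,3,4,5] \<and> snd y \<noteq> i"
  unfolding oppl_def set_map set_filter by (cases y) (auto simp del: list.set)

lemma opp_eq: "g < 9 \<Longrightarrow> opp (g,i) = set (oppl g i)"
  unfolding opp_def teams_def
  apply (rule set_eqI) apply (subst mem_oppl) apply (simp only: lt6[symmetric]) by auto

lemma dist_oppl: "distinct (oppl g i)"
  unfolding oppl_def by (simp add: distinct_map inj_on_def)

lemma sum_oppl: "sum f (set (oppl g i)) = sum_list (map f (oppl g i))"
  by (rule sum.distinct_set_conv_list[OF dist_oppl])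

lemma grank_list: "g < 9 \<Longrightarrow> grank tb V (g,i) =
   length (filter (\<lambda>y. ranks_above V (tb V) (opp y) y (opp (g,i)) (g,i)) (oppl g i)) + 1"
proof -
  have "{y \<in> set (oppl g i). P y} = set (filter P (oppl g i))" for P by simp
  moreover have "card (set (filter P (oppl g i))) = length (filter P (oppl g i))" for P
    by (rule distinct_card) (simp add: dist_oppl)
  ultimately show "g < 9 \<Longrightarrow> ?thesis" unfolding grank_def by (simp only: opp_eq)
qed

definition T1 :: "nat \<Rightarrow> nat \<Rightarrow> nat \<times> nat" where
  "T1 i j = (if (i,j) = (1,4) \<or> (i,j) = (4,1) then (0,0) else if (i,j) = (1,2) then (2,0)
             else if i < j then (1,0) else (0,1))"

definition mkV :: "(nat \<Rightarrow> nat \<Rightarrow> nat \<times> nat) \<Rightarrow> results" where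
  "mkV A = (\<lambda>(g,i) (h,j). if g = 0 \<and> h = 0 then A i j else T1 i j)"


definition T0 :: "nat \<Rightarrow> nat \<Rightarrow> nat \<times> nat" where
  "T0 i j = (if (i,j) = (1,5) \<or> (i,j) = (5,1) \<or> (i,j) = (3,4) \<or> (i,j) = (4,5) \<or> (i,j) = (5,4) then (0,0)
             else if (i,j) = (3,2) then (1,0)
             else if i < j then (1,0) else (0,1))"

definition T0' :: "nat \<Rightarrow> nat \<Rightarrow> nat \<times> nat" where
  "T0' i j = (if (i,j) = (1,4) then (1,1) else T0 i j)"

lemma six_cases: "(i::nat) < 6 \<Longrightarrow> i = 0 \<or> i = 1 \<or> i = 2 \<or> i = 3 \<or> i = 4 \<or> i = 5" by auto

lemmas stat_simps = opp_eq sum_oppl oppl_def pts_def gs_def gc_def match_pts_def mkV_def T1_def T0_def T0'_def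

lemma st_other: "g \<noteq> 0 \<Longrightarrow> g < 9 \<Longrightarrow> i < 6 \<Longrightarrow>
   pts (mkV A) (opp (g,i)) (g,i) = [30,20,18,12,8,0] ! i \<and>
   gs (mkV A) (opp (g,i)) (g,i) = [10,7,6,4,2,0] ! i \<and>
   gc (mkV A) (opp (g,i)) (g,i) = [0,2,5,6,6,10] ! i"
  by (drule six_cases; elim disjE; simp add: stat_simps)

lemma st_0: "i < 6 \<Longrightarrow>
   pts (mkV T0) (opp (0,i)) (0,i) = [30,20,15,13,3,4] ! i \<and>
   gs (mkV T0) (opp (0,i)) (0,i) = [10,6,5,4,0,0] ! i \<and>
   gc (mkV T0) (opp (0,i)) (0,i) = [0,2,5,5,7,6] ! i"
  by (drule six_cases; elim disjE; simp add: stat_simps)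

lemma st_0': "i < 6 \<Longrightarrow>
   pts (mkV T0') (opp (0,i)) (0,i) = [30,18,15,13,4,4] ! i \<and>
   gs (mkV T0') (opp (0,i)) (0,i) = [10,6,5,4,1,0] ! i \<and>
   gc (mkV T0') (opp (0,i)) (0,i) = [0,3,5,5,7,6] ! i"
  by (drule six_cases; elim disjE; simp add: stat_simps)

lemmas stO = st_other[THEN conjunct1] st_other[THEN conjunct2, THEN conjunct1] st_other[THEN conjunct2, THEN conjunct2]
lemmas st0 = st_0[THEN conjunct1] st_0[THEN conjunct2, THEN conjunct1] st_0[THEN conjunct2, THEN conjunct2]
lemmas st0' = st_0'[THEN conjunct1] st_0'[THEN conjunct2, THEN conjunct1] st_0'[THEN conjunct2, THEN conjunct2]

lemma gr_other: "g \<noteq> 0 \<Longrightarrow> g < 9 \<Longrightarrow> i < 6 \<Longrightarrow> grank tb (mkV A) (g,i) = i + 1"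
  by (drule six_cases; elim disjE; simp add: grank_list oppl_def ranks_above_def gd_def stO)

lemma gr_0: "i < 6 \<Longrightarrow> grank tb (mkV T0) (0,i) = [1,2,3,4,6,5] ! i"
  by (drule six_cases; elim disjE; simp add: grank_list oppl_def ranks_above_def gd_def st0)

lemma gr_0': "i < 6 \<Longrightarrow> grank tb (mkV T0') (0,i) = [1,2,3,4,5,6] ! i"
  by (drule six_cases; elim disjE; simp add: grank_list oppl_def ranks_above_def gd_def st0')

lemma filt_set: "{y \<in> set xs. P y} = set (filter P xs)" by simp

lemma ru_other: "g \<noteq> 0 \<Longrightarrow> g < 9 \<Longrightarrow> ru_opp tb (mkV A) (g,1) = {(g,0),(g,2),(g,3),(g,4)}"
  unfolding ru_opp_def by (simp only: opp_eq filt_set) (simp add: oppl_def gr_other)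

lemma ru_0: "ru_opp tb (mkV T0) (0,1) = {(0,0),(0,2),(0,3),(0,5)}"
  unfolding ru_opp_def by (simp only: opp_eq filt_set) (simp add: oppl_def gr_0)

lemma ru_0': "ru_opp tb (mkV T0') (0,1) = {(0,0),(0,2),(0,3),(0,4)}"
  unfolding ru_opp_def by (simp only: opp_eq filt_set) (simp add: oppl_def gr_0')

lemma rst_other: assumes "g \<noteq> 0" "g < 9" shows "
   pts (mkV A) (ru_opp tb (mkV A) (g,1)) (g,1) = 14 \<and>
   gs (mkV A) (ru_opp tb (mkV A) (g,1)) (g,1) = 5 \<and>
   gc (mkV A) (ru_opp tb (mkV A) (g,1)) (g,1) = 2"
  unfolding ru_other[OF assms] using assms by (simp add: pts_def gs_def gc_def match_pts_def mkV_def T1_def)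

lemma rst_0: "pts (mkV T0) (ru_opp tb (mkV T0) (0,1)) (0,1) = 14 \<and>
   gs (mkV T0) (ru_opp tb (mkV T0) (0,1)) (0,1) = 4 \<and>
   gc (mkV T0) (ru_opp tb (mkV T0) (0,1)) (0,1) = 2"
  unfolding ru_0 by (simp add: pts_def gs_def gc_def match_pts_def mkV_def T0_def)

lemma rst_0': "pts (mkV T0') (ru_opp tb (mkV T0') (0,1)) (0,1) = 16 \<and>
   gs (mkV T0') (ru_opp tb (mkV T0') (0,1)) (0,1) = 6 \<and>
   gc (mkV T0') (ru_opp tb (mkV T0') (0,1)) (0,1) = 3"
  unfolding ru_0' by (simp add: pts_def gs_def gc_def match_pts_def mkV_def T0'_def T0_def)

lemma lt9: "(g::nat) < 9 \<longleftrightarrow> g \<in> set [0,1,2,3,4,5,6,7,8]"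
  by (simp add: numeral_eq_Suc less_Suc_eq)

lemma runners: assumes "\<And>i. i < 6 \<Longrightarrow> (grank tb (mkV A) (0,i) = 2) = (i = 1)"
  shows "runners_up tb (mkV A) = set (map (\<lambda>g. (g,1)) [0,1,2,3,4,5,6,7,8])"
proof (rule set_eqI)
  fix x :: team
  obtain g i where x: "x = (g,i)" by (cases x)
  have "x \<in> runners_up tb (mkV A) \<longleftrightarrow> g < 9 \<and> i = 1"
  proof (cases "g = 0")
    case True
    then show ?thesis unfolding x runners_up_def teams_def using assms by auto
  next
    case False
    then show ?thesis unfolding x runners_up_def teams_def using gr_other[of g _ tb A] by auto
  qed
  also have "\<dots> \<longleftrightarrow> x \<in> set (map (\<lambda>g. (g,1)) [0,1,2,3,4,5,6,7,8])"
    unfolding x set_map lt9 by (simp only: set_simps image_insert image_empty) blast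
  finally show "x \<in> runners_up tb (mkV A) \<longleftrightarrow> x \<in> set (map (\<lambda>g. (g,1)) [0,1,2,3,4,5,6,7,8])" .
qed

lemma g0_2: "i < 6 \<Longrightarrow> (grank tb (mkV T0) (0,i) = 2) = (i = 1)"
  by (drule six_cases; elim disjE; simp add: gr_0)

lemma g0_2': "i < 6 \<Longrightarrow> (grank tb (mkV T0') (0,i) = 2) = (i = 1)"
  by (drule six_cases; elim disjE; simp add: gr_0')

lemma card_filt: "distinct xs \<Longrightarrow> card {y \<in> set xs. P y} = length (filter P xs)"
proof -
  assume d: "distinct xs"
  have "{y \<in> set xs. P y} = set (filter P xs)" by simp
  also have "card \<dots> = length (filter P xs)" by (rule distinct_card) (simp add: d)
  finally show ?thesis .
qed

lemmas rO = rst_other[THEN conjunct1] rst_other[THEN conjunct2, THEN conjunct1] rst_other[THEN conjunct2, THEN conjunct2]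

lemmas r0 = rst_0[THEN conjunct1] rst_0[THEN conjunct2, THEN conjunct1] rst_0[THEN conjunct2, THEN conjunct2]
lemmas r0' = rst_0'[THEN conjunct1] rst_0'[THEN conjunct2, THEN conjunct1] rst_0'[THEN conjunct2, THEN conjunct2]

lemma above_0: "ranks_above (mkV T0) (tb2 (mkV T0)) (ru_opp tb (mkV T0) (g,1)) (g,1) (ru_opp tb (mkV T0) (0,1)) (0,1)"
  if "g \<noteq> 0" "g < 9"
  unfolding ranks_above_def gd_def rO[OF that(1,2), where tb=tb] r0[where tb=tb] by simp

lemma above_0': "\<not> ranks_above (mkV T0') (tb2 (mkV T0')) (ru_opp tb (mkV T0') (g,1)) (g,1) (ru_opp tb (mkV T0') (0,1)) (0,1)"
  if "g \<noteq> 0" "g < 9"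
  unfolding ranks_above_def gd_def rO[OF that(1,2), where tb=tb] r0'[where tb=tb] by simp

lemma rrank_0: "rrank tb tb2 (mkV T0) (0,1) = 9"
proof -
  have r: "runners_up tb (mkV T0) = set (map (\<lambda>g. (g,1)) [0,1,2,3,4,5,6,7,8])"
    by (rule runners) (rule g0_2)
  show ?thesis unfolding rrank_def r
    by (subst card_filt) (simp_all add: above_0[unfolded One_nat_def])
qed

lemma rrank_0': "rrank tb tb2 (mkV T0') (0,1) = 1"
proof -
  have r: "runners_up tb (mkV T0') = set (map (\<lambda>g. (g,1)) [0,1,2,3,4,5,6,7,8])"
    by (rule runners) (rule g0_2')
  show ?thesis unfolding rrank_def r
    by (subst card_filt) (simp_all add: above_0'[unfolded One_nat_def])
qed

theorem corollary3p1:
  fixes tb tb2 :: "results \<Rightarrow> team \<Rightarrow> team \<Rightarrow> bool"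
  assumes "\<And>V. strict_total_on teams (tb V)"
      and "\<And>V. strict_total_on teams (tb2 V)"
  shows "\<exists>x V V'. x \<in> teams \<and> (\<exists>y \<in> opp x. opponent_scores_more V V' x y) \<and>
           outcome tb tb2 V x = 0 \<and> outcome tb tb2 V' x = 1"
proof (intro exI conjI)
  show "(0,1) \<in> teams" by (simp add: teams_def)
  show "\<exists>y \<in> opp (0,1). opponent_scores_more (mkV T0) (mkV T0') (0,1) y"
  proof
    show "(0::nat,4::nat) \<in> opp (0,1)" by (simp add: opp_def teams_def)
    show "opponent_scores_more (mkV T0) (mkV T0') (0,1) (0,4)"
      unfolding opponent_scores_more_def
      by (rule disjI1) (auto simp: mkV_def T0'_def T0_def)
  qed
  show "outcome tb tb2 (mkV T0) (0,1) = 0"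
    unfolding outcome_def using gr_0[of 1 tb] rrank_0 by simp
  show "outcome tb tb2 (mkV T0') (0,1) = 1"
    unfolding outcome_def using gr_0'[of 1 tb] rrank_0' by simp
qed
end
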